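(* Let $\mathcal{X}$ be a finite alphabet with $|\mathcal{X}|\ge 2$, let $w(i)>0$ for $i\in\mathcal{X}$ be arbitrary positive weights (not necessarily summing to $1$), and let $a>0$. Run the two-queue method with the exponential combining rule: the first queue initially contains all items of $\mathcal{X}$ arranged from head to tail in order of nondecreasing weight, and the second queue is initially empty. At each step, the two nodes of smallest weight are removed (each being at the head of one of the two queues), say with weights $w(j)$ and $w(k)$; they are made the two children of a new compound node of weight $a\,(w(j)+w(k))$, which is inserted at the tail of the second queue. This is repeated until a single node (the root) remains. Label the two edges from each internal node to its children with $0$ and $1$, and let $c(i)$ be the label sequence from the root to the leaf for item $i$, of length $n(i)$. Then the resulting code is optimal: its length vector $N=\{n(i)\}$ minimizes $L_a(W,N)$ over all binary prefix codes for $\mathcal{X}$.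
   Context: A binary prefix code for an alphabet $\mathcal{X}$ assigns to each $i\in\mathcal{X}$ a codeword $c(i)\in\{0,1\}^*$ such that no codeword is a prefix of another; $n(i)$ denotes the length of $c(i)$. For weights $W=\{w(i)\}$ and $a>0$, $a\neq 1$, the exponential penalty is $L_a(W,N)=\log_a \sum_{i\in\mathcal{X}} w(i)a^{n(i)}$ (for $a>1$ minimizing it means minimizing $\sum_i w(i)a^{n(i)}$, for $a<1$ it means maximizing that sum); for $a=1$ the penalty is taken to be $\sum_i w(i)n(i)$. *)

theory Defs
  imports Complex_Main "HOL-Library.Sublist"
begin

datatype 'a ctree = Leaf 'a | Node "'a ctree" "'a ctree"

fun cweight :: "real \<Rightarrow> ('a \<Rightarrow> real) \<Rightarrow> 'a ctree \<Rightarrow> real" where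
  "cweight a w (Leaf i) = w i"
| "cweight a w (Node l r) = a * (cweight a w l + cweight a w r)"

text \<open>Codewords read off the tree: edge to the first child labelled 0 (False),
  to the second child labelled 1 (True).\<close>
fun codes :: "'a ctree \<Rightarrow> ('a \<times> bool list) list" where
  "codes (Leaf i) = [(i, [])]"
| "codes (Node l r) = map (\<lambda>(i, c). (i, False # c)) (codes l) @ map (\<lambda>(i, c). (i, True # c)) (codes r)"

definition codeword :: "'a ctree \<Rightarrow> 'a \<Rightarrow> bool list" where
  "codeword t i = the (map_of (codes t) i)"

text \<open>A state is (queue 1, queue 2), lists from head to tail.\<close>
inductive two_queue_step :: "real \<Rightarrow> ('a \<Rightarrow> real) \<Rightarrow> 'a ctree list \<times> 'a ctree list
    \<Rightarrow> 'a ctree list \<times> 'a ctree list \<Rightarrow> bool" for a w where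
  both1: "(\<forall>z\<in>set q1 \<union> set q2. cweight a w x \<le> cweight a w z \<and> cweight a w y \<le> cweight a w z)
     \<Longrightarrow> two_queue_step a w (x # y # q1, q2) (q1, q2 @ [Node x y])"
| both2: "(\<forall>z\<in>set q1 \<union> set q2. cweight a w x \<le> cweight a w z \<and> cweight a w y \<le> cweight a w z)
     \<Longrightarrow> two_queue_step a w (q1, x # y # q2) (q1, q2 @ [Node x y])"
| mixed12: "(\<forall>z\<in>set q1 \<union> set q2. cweight a w x \<le> cweight a w z \<and> cweight a w y \<le> cweight a w z)
     \<Longrightarrow> two_queue_step a w (x # q1, y # q2) (q1, q2 @ [Node x y])"
| mixed21: "(\<forall>z\<in>set q1 \<union> set q2. cweight a w x \<le> cweight a w z \<and> cweight a w y \<le> cweight a w z)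
     \<Longrightarrow> two_queue_step a w (y # q1, x # q2) (q1, q2 @ [Node x y])"

definition prefix_code :: "'a set \<Rightarrow> ('a \<Rightarrow> bool list) \<Rightarrow> bool" where
  "prefix_code X c \<longleftrightarrow> (\<forall>i\<in>X. \<forall>j\<in>X. i \<noteq> j \<longrightarrow> \<not> prefix (c i) (c j))"

definition L_pen :: "real \<Rightarrow> ('a \<Rightarrow> real) \<Rightarrow> 'a set \<Rightarrow> ('a \<Rightarrow> nat) \<Rightarrow> real" where
  "L_pen a w X n = (if a = 1 then (\<Sum>i\<in>X. w i * real (n i))
                    else log a (\<Sum>i\<in>X. w i * a ^ n i))"

end

theory Submission
  imports Defs "HOL-Library.Multiset"
begin

fun leaves :: "'a ctree \<Rightarrow> 'a list" where
  "leaves (Leaf i) = [i]"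
| "leaves (Node l r) = leaves l @ leaves r"

definition phi :: "real \<Rightarrow> nat \<Rightarrow> real" where
  "phi a k = (\<Sum>j<k. a ^ j)"

fun gcost :: "real \<Rightarrow> ('a \<Rightarrow> real) \<Rightarrow> 'a ctree \<Rightarrow> real" where
  "gcost a w (Leaf i) = 0"
| "gcost a w (Node l r) = gcost a w l + gcost a w r + cweight a w l + cweight a w r"

definition fcost :: "real \<Rightarrow> ('a \<Rightarrow> real) \<Rightarrow> 'a ctree set \<Rightarrow> ('a ctree \<Rightarrow> nat) \<Rightarrow> real" where
  "fcost a w F n = (\<Sum>T\<in>F. gcost a w T + cweight a w T * phi a (n T))"

definition kraft :: "'b set \<Rightarrow> ('b \<Rightarrow> nat) \<Rightarrow> real" where
  "kraft F n = (\<Sum>T\<in>F. (1/2) ^ n T)"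

lemma phi_Suc: "phi a (Suc k) = 1 + a * phi a k"
  unfolding phi_def by (simp only: sum.lessThan_Suc_shift) (simp add: sum_distrib_left)

lemma phi_Suc2: "phi a (Suc k) = phi a k + a ^ k"
  unfolding phi_def by simp

lemma phi_nonneg: "a \<ge> 0 \<Longrightarrow> phi a k \<ge> 0"
  unfolding phi_def by (simp add: sum_nonneg)

lemma phi_mono: "a \<ge> 0 \<Longrightarrow> m \<le> k \<Longrightarrow> phi a m \<le> phi a k"
  unfolding phi_def by (rule sum_mono2) auto

lemma leaves_ne: "leaves T \<noteq> []"
  by (induction T) auto

lemma cweight_pos: "a > 0 \<Longrightarrow> (\<forall>i\<in>set (leaves T). w i > 0) \<Longrightarrow> cweight a w T > 0"
  by (induction T) auto

lemma map_fst_codes: "map fst (codes t) = leaves t"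
  by (induction t) (auto simp: case_prod_beta comp_def)

lemma dom_codes: "dom (map_of (codes t)) = set (leaves t)"
  by (simp add: dom_map_of_conv_image_fst flip: map_fst_codes)

lemma codeword_Node:
  assumes "distinct (leaves (Node l r))"
  shows "i \<in> set (leaves l) \<Longrightarrow> codeword (Node l r) i = False # codeword l i"
    and "i \<in> set (leaves r) \<Longrightarrow> codeword (Node l r) i = True # codeword r i"
proof -
  have ml: "map_of (map (\<lambda>(i, c). (i, b # c)) (codes u)) = map_option (Cons b) \<circ> map_of (codes u)" for b and u :: "'a ctree"
    using map_of_map[of "Cons b" "codes u"] by (simp add: case_prod_beta)
  show "i \<in> set (leaves l) \<Longrightarrow> codeword (Node l r) i = False # codeword l i"
  proof -
    assume i: "i \<in> set (leaves l)"
    then have "i \<notin> set (leaves r)" using assms by auto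
    then have "map_of (codes r) i = None" using dom_codes[of r] by auto
    moreover obtain c where "map_of (codes l) i = Some c" using dom_codes[of l] i by auto
    ultimately show ?thesis by (simp add: codeword_def ml map_add_def)
  qed
  show "i \<in> set (leaves r) \<Longrightarrow> codeword (Node l r) i = True # codeword r i"
  proof -
    assume i: "i \<in> set (leaves r)"
    then have "i \<notin> set (leaves l)" using assms by auto
    then have "map_of (codes l) i = None" using dom_codes[of l] by auto
    moreover obtain c where "map_of (codes r) i = Some c" using dom_codes[of r] i by auto
    ultimately show ?thesis by (simp add: codeword_def ml map_add_def)
  qed
qed

lemma cweight_sum: "distinct (leaves t) \<Longrightarrow>
  cweight a w t = (\<Sum>i\<in>set (leaves t). w i * a ^ length (codeword t i))"
proof (induction t)
  case (Leaf x)
  then show ?case by (simp add: codeword_def)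
next
  case (Node l r)
  have d: "set (leaves l) \<inter> set (leaves r) = {}" "distinct (leaves l)" "distinct (leaves r)"
    using Node.prems by auto
  have "(\<Sum>i\<in>set (leaves (Node l r)). w i * a ^ length (codeword (Node l r) i))
     = (\<Sum>i\<in>set (leaves l). w i * a ^ length (codeword (Node l r) i)) + (\<Sum>i\<in>set (leaves r). w i * a ^ length (codeword (Node l r) i))"
    using d by (simp add: sum.union_disjoint)
  also have "\<dots> = a * (\<Sum>i\<in>set (leaves l). w i * a ^ length (codeword l i)) + a * (\<Sum>i\<in>set (leaves r). w i * a ^ length (codeword r i))"
    using codeword_Node[OF Node.prems] by (simp add: sum_distrib_left algebra_simps)
  finally show ?case using Node d by (simp add: algebra_simps)
qed

lemma gcost_sum: "distinct (leaves t) \<Longrightarrow>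
  gcost a w t = (\<Sum>i\<in>set (leaves t). w i * phi a (length (codeword t i)))"
proof (induction t)
  case (Leaf x)
  then show ?case by (simp add: codeword_def phi_def)
next
  case (Node l r)
  have d: "set (leaves l) \<inter> set (leaves r) = {}" "distinct (leaves l)" "distinct (leaves r)"
    using Node.prems by auto
  have "(\<Sum>i\<in>set (leaves (Node l r)). w i * phi a (length (codeword (Node l r) i)))
     = (\<Sum>i\<in>set (leaves l). w i * phi a (length (codeword (Node l r) i))) + (\<Sum>i\<in>set (leaves r). w i * phi a (length (codeword (Node l r) i)))"
    using d by (simp add: sum.union_disjoint)
  also have "\<dots> = (\<Sum>i\<in>set (leaves l). w i * phi a (length (codeword l i)) + w i * a ^ length (codeword l i))
     + (\<Sum>i\<in>set (leaves r). w i * phi a (length (codeword r i)) + w i * a ^ length (codeword r i))"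
    using codeword_Node[OF Node.prems] by (simp add: phi_Suc2 algebra_simps)
  finally show ?case using Node d cweight_sum[of l a w] cweight_sum[of r a w]
    by (simp add: sum.distrib)
qed


lemma kraft_prefix_aux:
  "\<forall>X (c::'b \<Rightarrow> bool list). finite X \<longrightarrow> prefix_code X c \<longrightarrow> (\<forall>i\<in>X. length (c i) \<le> N)
     \<longrightarrow> (\<Sum>i\<in>X. (1/2::real) ^ length (c i)) \<le> 1"
proof (induction N)
  case 0
  show ?case
  proof (intro allI impI)
    fix X and c :: "'b \<Rightarrow> bool list"
    assume f: "finite X" and p: "prefix_code X c" and l: "\<forall>i\<in>X. length (c i) \<le> 0"
    have "card X \<le> 1"
      using p l unfolding prefix_code_def by (auto simp: card_le_Suc0_iff_eq[OF f])
    then show "(\<Sum>i\<in>X. (1/2::real) ^ length (c i)) \<le> 1" using l by simp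
  qed
next
  case (Suc N)
  show ?case
  proof (intro allI impI)
    fix X and c :: "'b \<Rightarrow> bool list"
    assume f: "finite X" and p: "prefix_code X c" and l: "\<forall>i\<in>X. length (c i) \<le> Suc N"
    show "(\<Sum>i\<in>X. (1/2::real) ^ length (c i)) \<le> 1"
    proof (cases "\<exists>i\<in>X. c i = []")
      case True
      then obtain i where i: "i \<in> X" "c i = []" by blast
      have "X = {i}" using p i unfolding prefix_code_def by force
      then show ?thesis using i by simp
    next
      case False
      define X0 where "X0 = {i\<in>X. hd (c i) = False}"
      define X1 where "X1 = {i\<in>X. hd (c i) = True}"
      have XU: "X = X0 \<union> X1" and XD: "X0 \<inter> X1 = {}" unfolding X0_def X1_def by auto
      have fin: "finite X0" "finite X1" using f XU by auto
      have c0: "c i = False # tl (c i)" if "i \<in> X0" for i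
        using that False unfolding X0_def by (cases "c i") auto
      have c1: "c i = True # tl (c i)" if "i \<in> X1" for i
        using that False unfolding X1_def by (cases "c i") auto
      have p0: "prefix_code X0 (\<lambda>i. tl (c i))"
        unfolding prefix_code_def
      proof (intro ballI impI)
        fix i j assume ij: "i \<in> X0" "j \<in> X0" "i \<noteq> j"
        then have "\<not> prefix (c i) (c j)" using p XU unfolding prefix_code_def by blast
        then show "\<not> prefix (tl (c i)) (tl (c j))" using c0[OF ij(1)] c0[OF ij(2)]
          by (metis Cons_prefix_Cons)
      qed
      have p1: "prefix_code X1 (\<lambda>i. tl (c i))"
        unfolding prefix_code_def
      proof (intro ballI impI)
        fix i j assume ij: "i \<in> X1" "j \<in> X1" "i \<noteq> j"
        then have "\<not> prefix (c i) (c j)" using p XU unfolding prefix_code_def by blast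
        then show "\<not> prefix (tl (c i)) (tl (c j))" using c1[OF ij(1)] c1[OF ij(2)]
          by (metis Cons_prefix_Cons)
      qed
      have l0: "\<forall>i\<in>X0. length (tl (c i)) \<le> N" using l unfolding X0_def by auto
      have l1: "\<forall>i\<in>X1. length (tl (c i)) \<le> N" using l unfolding X1_def by auto
      have s0: "(\<Sum>i\<in>X0. (1/2::real) ^ length (tl (c i))) \<le> 1"
        using Suc.IH fin p0 l0 by blast
      have s1: "(\<Sum>i\<in>X1. (1/2::real) ^ length (tl (c i))) \<le> 1"
        using Suc.IH fin p1 l1 by blast
      have e0: "(\<Sum>i\<in>X0. (1/2::real) ^ length (c i)) = (1/2) * (\<Sum>i\<in>X0. (1/2::real) ^ length (tl (c i)))"
        unfolding sum_distrib_left
      proof (rule sum.cong)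
        fix i assume "i \<in> X0"
        then have "length (c i) = Suc (length (tl (c i)))" using c0 by (metis length_Cons)
        then show "(1/2::real) ^ length (c i) = 1/2 * (1/2) ^ length (tl (c i))" by (metis power_Suc)
      qed simp
      have e1: "(\<Sum>i\<in>X1. (1/2::real) ^ length (c i)) = (1/2) * (\<Sum>i\<in>X1. (1/2::real) ^ length (tl (c i)))"
        unfolding sum_distrib_left
      proof (rule sum.cong)
        fix i assume "i \<in> X1"
        then have "length (c i) = Suc (length (tl (c i)))" using c1 by (metis length_Cons)
        then show "(1/2::real) ^ length (c i) = 1/2 * (1/2) ^ length (tl (c i))" by (metis power_Suc)
      qed simp
      have "(\<Sum>i\<in>X. (1/2::real) ^ length (c i)) = (\<Sum>i\<in>X0. (1/2::real) ^ length (c i)) + (\<Sum>i\<in>X1. (1/2::real) ^ length (c i))"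
        using XU XD fin by (simp add: sum.union_disjoint)
      then show ?thesis using e0 e1 s0 s1 by linarith
    qed
  qed
qed

lemma kraft_prefix: "finite X \<Longrightarrow> prefix_code X c \<Longrightarrow> (\<Sum>i\<in>X. (1/2::real) ^ length (c i)) \<le> 1"
  using kraft_prefix_aux[of "Max ((\<lambda>i. length (c i)) ` X)"] by auto


lemma sum_pair: "finite F \<Longrightarrow> p \<in> F \<Longrightarrow> q \<in> F \<Longrightarrow> p \<noteq> q \<Longrightarrow>
  sum f F = f p + f q + sum f (F - {p, q})"
proof -
  assume a: "finite F" "p \<in> F" "q \<in> F" "p \<noteq> q"
  have "sum f F = f p + sum f (F - {p})" using a by (simp add: sum.remove)
  also have "sum f (F - {p}) = f q + sum f (F - {p} - {q})" using a by (simp add: sum.remove)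
  also have "F - {p} - {q} = F - {p, q}" by auto
  finally show ?thesis by (simp add: add.assoc)
qed

lemma swap:
  assumes "finite F" "p \<in> F" "q \<in> F" "cweight a w p \<le> cweight a w q" "n p \<le> n q" "a \<ge> 0"
  shows "fcost a w F (n(p := n q, q := n p)) \<le> fcost a w F n \<and> kraft F (n(p := n q, q := n p)) = kraft F n"
proof (cases "p = q")
  case True
  then show ?thesis by simp
next
  case False
  let ?n = "n(p := n q, q := n p)"
  have r1: "(\<Sum>T\<in>F - {p, q}. gcost a w T + cweight a w T * phi a (?n T)) = (\<Sum>T\<in>F - {p, q}. gcost a w T + cweight a w T * phi a (n T))"
    by (rule sum.cong) auto
  have r2: "(\<Sum>T\<in>F - {p, q}. (1/2::real) ^ (?n T)) = (\<Sum>T\<in>F - {p, q}. (1/2) ^ (n T))"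
    by (rule sum.cong) auto
  have m: "phi a (n p) \<le> phi a (n q)" using phi_mono assms by blast
  have "0 \<le> (cweight a w q - cweight a w p) * (phi a (n q) - phi a (n p))"
    using m assms by (intro mult_nonneg_nonneg) auto
  then show ?thesis
    unfolding fcost_def kraft_def
    using sum_pair[OF assms(1-3) False, of "\<lambda>T. gcost a w T + cweight a w T * phi a (?n T)"]
      sum_pair[OF assms(1-3) False, of "\<lambda>T. gcost a w T + cweight a w T * phi a (n T)"]
      sum_pair[OF assms(1-3) False, of "\<lambda>T. (1/2::real) ^ (?n T)"]
      sum_pair[OF assms(1-3) False, of "\<lambda>T. (1/2::real) ^ (n T)"] r1 r2 False
    by (simp add: algebra_simps)
qed

lemma obtain_max:
  assumes "finite S" "S \<noteq> {}"
  obtains p where "p \<in> S" "\<forall>z\<in>S. (n z :: nat) \<le> n p"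
proof -
  have "Max (n ` S) \<in> n ` S" using assms by simp
  then obtain p where "p \<in> S" "n p = Max (n ` S)" by auto
  moreover have "\<forall>z\<in>S. n z \<le> Max (n ` S)" using assms by simp
  ultimately show ?thesis using that by auto
qed

lemma normalize:
  assumes fin: "finite F" and xy: "x \<in> F" "y \<in> F" "x \<noteq> y" and a: "a \<ge> 0"
    and minw: "\<forall>z\<in>F - {x, y}. cweight a w x \<le> cweight a w z \<and> cweight a w y \<le> cweight a w z"
  shows "\<exists>n2. fcost a w F n2 \<le> fcost a w F n \<and> kraft F n2 = kraft F n \<and>
           (\<forall>z\<in>F - {x, y}. n2 z \<le> n2 x \<and> n2 z \<le> n2 y)"
proof -
  obtain p where p: "p \<in> F - {y}" "\<forall>z\<in>F - {y}. n z \<le> n p"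
    using obtain_max[of "F - {y}" n] fin xy by blast
  define n1 where "n1 = n(x := n p, p := n x)"
  have vp: "cweight a w x \<le> cweight a w p" using p minw by (cases "p = x") auto
  have s1: "fcost a w F n1 \<le> fcost a w F n \<and> kraft F n1 = kraft F n"
  proof -
    have "x \<in> F - {y}" using xy by auto
    then have nxp: "n x \<le> n p" using p(2) by blast
    have "p \<in> F" using p by auto
    from swap[OF fin xy(1) this vp nxp a] show ?thesis unfolding n1_def .
  qed
  have n1x: "\<forall>z\<in>F - {y}. n1 z \<le> n1 x"
  proof
    fix z assume z: "z \<in> F - {y}"
    have "x \<in> F - {y}" using xy by auto
    then have "n x \<le> n p" using p(2) by blast
    moreover have "n z \<le> n p" using z p(2) by blast
    ultimately show "n1 z \<le> n1 x" unfolding n1_def by auto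
  qed
  obtain q where q: "q \<in> F - {x}" "\<forall>z\<in>F - {x}. n1 z \<le> n1 q"
    using obtain_max[of "F - {x}" n1] fin xy by blast
  define n2 where "n2 = n1(y := n1 q, q := n1 y)"
  have vq: "cweight a w y \<le> cweight a w q" using q minw by (cases "q = y") auto
  have s2: "fcost a w F n2 \<le> fcost a w F n1 \<and> kraft F n2 = kraft F n1"
  proof -
    have "y \<in> F - {x}" using xy by auto
    then have nyq: "n1 y \<le> n1 q" using q(2) by blast
    have "q \<in> F" using q by auto
    from swap[OF fin xy(2) this vq nyq a] show ?thesis unfolding n2_def .
  qed
  have "\<forall>z\<in>F - {x, y}. n2 z \<le> n2 x \<and> n2 z \<le> n2 y"
  proof
    fix z assume z: "z \<in> F - {x, y}"
    show "n2 z \<le> n2 x \<and> n2 z \<le> n2 y"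
    proof (cases "q = y")
      case True
      then show ?thesis using z n1x q unfolding n2_def by auto
    next
      case False
      have h1: "n1 q \<le> n1 x" using n1x q False by auto
      have "y \<in> F - {x}" using xy by auto
      then have h2: "n1 y \<le> n1 q" using q(2) by blast
      have h3: "n1 z \<le> n1 x" "n1 z \<le> n1 q" using z n1x q(2) by auto
      have "q \<noteq> x" using q(1) by blast
      then show ?thesis using z xy False h1 h2 h3 unfolding n2_def by auto
    qed
  qed
  then show ?thesis using s1 s2 by (intro exI[of _ n2]) auto
qed


lemma half_pow_mult: "k \<le> m \<Longrightarrow> (1/2::real) ^ k * 2 ^ m = 2 ^ (m - k)"
proof -
  assume "k \<le> m"
  then have "(2::real) ^ m = 2 ^ (m - k) * 2 ^ k" by (simp add: power_add[symmetric])
  then have "(1/2::real) ^ k * 2 ^ m = 2 ^ (m - k) * ((1/2) ^ k * 2 ^ k)" by simp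
  also have "(1/2::real) ^ k * 2 ^ k = 1" by (simp add: power_mult_distrib[symmetric])
  finally show ?thesis by simp
qed

lemma gran: "finite R \<Longrightarrow> \<forall>z\<in>R. n z \<le> m \<Longrightarrow>
  (\<Sum>z\<in>R. (1/2::real) ^ (n z)) * 2 ^ m = real (\<Sum>z\<in>R. 2 ^ (m - n z))"
  unfolding sum_distrib_right of_nat_sum
  by (rule sum.cong) (auto simp: half_pow_mult)

lemma merge:
  assumes fin: "finite F" and xy: "x \<in> F" "y \<in> F" "x \<noteq> y" and nF: "Node x y \<notin> F" and a: "a > 0"
    and pos: "\<forall>T\<in>F. cweight a w T \<ge> 0"
    and k: "kraft F n \<le> 1" and mx: "\<forall>z\<in>F - {x, y}. n z \<le> n x \<and> n z \<le> n y"
  shows "\<exists>n'. kraft (insert (Node x y) (F - {x, y})) n' \<le> 1 \<and>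
           fcost a w (insert (Node x y) (F - {x, y})) n' \<le> fcost a w F n"
proof -
  define R where "R = F - {x, y}"
  define m where "m = min (n x) (n y)"
  define KR where "KR = (\<Sum>z\<in>R. (1/2::real) ^ (n z))"
  have finR: "finite R" using fin R_def by auto
  have kF: "kraft F n = (1/2) ^ n x + (1/2) ^ n y + KR"
    unfolding kraft_def KR_def R_def using sum_pair[OF fin xy] by simp
  have KR0: "KR \<ge> 0" unfolding KR_def by (simp add: sum_nonneg)
  have m1: "m \<ge> 1"
  proof (rule ccontr)
    assume "\<not> m \<ge> 1"
    then have d: "n x = 0 \<or> n y = 0" unfolding m_def by auto
    have p1: "(1/2::real) ^ n x > 0" and p2: "(1/2::real) ^ n y > 0" by auto
    from d have "kraft F n > 1"
    proof
      assume "n x = 0" then have "(1/2::real) ^ n x = 1" by simp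
      then show ?thesis using kF KR0 p2 by linarith
    next
      assume "n y = 0" then have "(1/2::real) ^ n y = 1" by simp
      then show ?thesis using kF KR0 p1 by linarith
    qed
    then show False using k by simp
  qed
  have key: "KR + 2 * (1/2) ^ m \<le> 1"
  proof (cases "n x = n y")
    case True
    then show ?thesis using k kF unfolding m_def by simp
  next
    case False
    have lt: "KR + (1/2) ^ m < 1"
    proof -
      have p1: "(1/2::real) ^ n x > 0" and p2: "(1/2::real) ^ n y > 0" by auto
      show ?thesis
      proof (cases "n x \<le> n y")
        case True then have "(1/2::real) ^ m = (1/2) ^ n x" unfolding m_def by simp
        then show ?thesis using k kF p2 by linarith
      next
        case False then have "(1/2::real) ^ m = (1/2) ^ n y" unfolding m_def by simp
        then show ?thesis using k kF p1 by linarith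
      qed
    qed
    have le: "\<forall>z\<in>R. n z \<le> m" using mx unfolding R_def m_def by auto
    define kk where "kk = (\<Sum>z\<in>R. (2::nat) ^ (m - n z))"
    have g: "KR * 2 ^ m = real kk" unfolding KR_def kk_def using gran[OF finR le] .
    have hm: "(1/2::real) ^ m * 2 ^ m = 1" using half_pow_mult[of m m] by simp
    have "(KR + (1/2) ^ m) * 2 ^ m < 2 ^ m" using lt by simp
    then have "real kk + 1 < 2 ^ m" using g hm by (simp add: algebra_simps)
    then have "kk + 1 < 2 ^ m"
      by (metis of_nat_1 of_nat_add of_nat_less_iff of_nat_numeral of_nat_power)
    then have "kk + 2 \<le> (2::nat) ^ m" by simp
    then have "real kk + 2 \<le> 2 ^ m"
      by (metis of_nat_add of_nat_le_iff of_nat_numeral of_nat_power)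
    then have "(KR + 2 * (1/2) ^ m) * 2 ^ m \<le> 1 * 2 ^ m" using g hm by (simp add: algebra_simps)
    then show ?thesis by (rule mult_right_le_imp_le) simp
  qed
  define n' where "n' = n(Node x y := m - 1)"
  have nR: "Node x y \<notin> R" using nF R_def by auto
  have msuc: "m = Suc (m - 1)" using m1 by simp
  have kraft': "kraft (insert (Node x y) R) n' = (1/2) ^ (m - 1) + KR"
  proof -
    have "(\<Sum>z\<in>R. (1/2::real) ^ (n' z)) = KR" unfolding KR_def n'_def
      by (rule sum.cong) (use nR in auto)
    then show ?thesis unfolding kraft_def using finR nR by (simp add: n'_def)
  qed
  have h2: "(1/2::real) ^ (m - 1) = 2 * (1/2) ^ m"
    by (subst msuc) simp
  define CR where "CR = (\<Sum>T\<in>R. gcost a w T + cweight a w T * phi a (n T))"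
  have cost': "fcost a w (insert (Node x y) R) n' = gcost a w (Node x y) + cweight a w (Node x y) * phi a (m - 1) + CR"
  proof -
    have "(\<Sum>T\<in>R. gcost a w T + cweight a w T * phi a (n' T)) = CR" unfolding CR_def n'_def
      by (rule sum.cong) (use nR in auto)
    then show ?thesis unfolding fcost_def using finR nR by (simp add: n'_def)
  qed
  have costF: "fcost a w F n = (gcost a w x + cweight a w x * phi a (n x)) + (gcost a w y + cweight a w y * phi a (n y)) + CR"
    unfolding fcost_def CR_def R_def using sum_pair[OF fin xy] by simp
  have pm: "phi a m = 1 + a * phi a (m - 1)" using phi_Suc[of a "m - 1"] msuc by simp
  have vx: "cweight a w x * phi a m \<le> cweight a w x * phi a (n x)"
    using pos xy phi_mono[of a m "n x"] a unfolding m_def by (intro mult_left_mono) auto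
  have vy: "cweight a w y * phi a m \<le> cweight a w y * phi a (n y)"
    using pos xy phi_mono[of a m "n y"] a unfolding m_def by (intro mult_left_mono) auto
  have "fcost a w (insert (Node x y) R) n' = gcost a w x + gcost a w y + cweight a w x * phi a m + cweight a w y * phi a m + CR"
    unfolding cost' pm by (simp add: algebra_simps)
  also have "\<dots> \<le> fcost a w F n" unfolding costF using vx vy by simp
  finally have c: "fcost a w (insert (Node x y) R) n' \<le> fcost a w F n" .
  have "kraft (insert (Node x y) R) n' \<le> 1" using kraft' h2 key by simp
  then show ?thesis using c unfolding R_def by blast
qed


lemma step_split: "two_queue_step a w s s' \<Longrightarrow> \<exists>x y R. mset (fst s @ snd s) = mset (x # y # R) \<and>
   mset (fst s' @ snd s') = mset (Node x y # R) \<and>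
   (\<forall>z\<in>set R. cweight a w x \<le> cweight a w z \<and> cweight a w y \<le> cweight a w z)"
proof (induction rule: two_queue_step.induct)
  case (both1 q1 q2 x y)
  then show ?case by (intro exI[of _ x] exI[of _ y] exI[of _ "q1 @ q2"]) auto
next
  case (both2 q1 q2 x y)
  then show ?case by (intro exI[of _ x] exI[of _ y] exI[of _ "q1 @ q2"]) auto
next
  case (mixed12 q1 q2 x y)
  then show ?case by (intro exI[of _ x] exI[of _ y] exI[of _ "q1 @ q2"]) auto
next
  case (mixed21 q1 q2 x y)
  then show ?case by (intro exI[of _ x] exI[of _ y] exI[of _ "q1 @ q2"]) auto
qed

lemma mset_concat_map: "mset (concat (map f L)) = (\<Sum>T\<in>#mset L. mset (f T))"
  by (induction L) auto

definition inv :: "('a \<Rightarrow> real) \<Rightarrow> 'a set \<Rightarrow> 'a ctree list \<Rightarrow> bool" where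
  "inv w X L \<longleftrightarrow> distinct (concat (map leaves L)) \<and> set (concat (map leaves L)) = X \<and> (\<forall>i\<in>X. w i > 0)"

lemma inv_mset: "mset L = mset L' \<Longrightarrow> mset (concat (map leaves L)) = mset (concat (map leaves L'))"
  by (simp add: mset_concat_map)

lemma inv_step: "two_queue_step a w s s' \<Longrightarrow> inv w X (fst s @ snd s) \<Longrightarrow> inv w X (fst s' @ snd s')"
proof -
  assume st: "two_queue_step a w s s'" and iv: "inv w X (fst s @ snd s)"
  obtain x y R where e: "mset (fst s @ snd s) = mset (x # y # R)" "mset (fst s' @ snd s') = mset (Node x y # R)"
    using step_split[OF st] by blast
  have "mset (concat (map leaves (fst s @ snd s))) = mset (concat (map leaves (fst s' @ snd s')))"
    using inv_mset[OF e(1)] inv_mset[OF e(2)] by simp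
  then show ?thesis using iv unfolding inv_def
    by (metis mset_eq_imp_distinct_iff set_mset_mset)
qed

lemma inv_steps: "(two_queue_step a w)\<^sup>*\<^sup>* s s' \<Longrightarrow> inv w X (fst s @ snd s) \<Longrightarrow> inv w X (fst s' @ snd s')"
  by (induction rule: rtranclp_induct) (auto intro: inv_step)

lemma distinct_trees: "distinct (concat (map leaves L)) \<Longrightarrow> distinct L"
proof (induction L)
  case Nil
  then show ?case by simp
next
  case (Cons T L)
  have "T \<notin> set L"
  proof
    assume "T \<in> set L"
    then have s1: "set (leaves T) \<subseteq> set (concat (map leaves L))" by auto
    have s2: "set (leaves T) \<noteq> {}" using leaves_ne[of T] by simp
    have s3: "set (leaves T) \<inter> set (concat (map leaves L)) = {}" using Cons.prems by simp
    have "set (leaves T) \<inter> set (concat (map leaves L)) = set (leaves T)" using s1 by (rule Int_absorb2)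
    then show False using s2 s3 by simp
  qed
  then show ?case using Cons by simp
qed

lemma node_neq: "Node x y \<noteq> x" "Node x y \<noteq> y"
proof -
  have "size (Node x y) \<noteq> size x" "size (Node x y) \<noteq> size y" by simp_all
  then show "Node x y \<noteq> x" "Node x y \<noteq> y" by metis+
qed

lemma main:
  assumes "(two_queue_step a w)\<^sup>*\<^sup>* s s'" and a: "a > 0"
  shows "s' = ([], [t]) \<Longrightarrow> inv w X (fst s @ snd s) \<Longrightarrow>
     \<forall>n. kraft (set (fst s @ snd s)) n \<le> 1 \<longrightarrow> gcost a w t \<le> fcost a w (set (fst s @ snd s)) n"
  using assms(1)
proof (induction rule: converse_rtranclp_induct)
  case base
  show ?case
  proof (intro allI impI)
    fix n
    have "\<forall>i\<in>set (leaves t). w i > 0" using base unfolding inv_def by simp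
    then have "cweight a w t > 0" using cweight_pos a by blast
    moreover have "phi a (n t) \<ge> 0" using phi_nonneg a by simp
    ultimately show "gcost a w t \<le> fcost a w (set (fst s' @ snd s')) n"
      using base unfolding fcost_def by simp
  qed
next
  case (step s s1)
  let ?L = "fst s @ snd s"
  let ?L1 = "fst s1 @ snd s1"
  obtain x y R where e: "mset ?L = mset (x # y # R)" "mset ?L1 = mset (Node x y # R)"
    and mw: "\<forall>z\<in>set R. cweight a w x \<le> cweight a w z \<and> cweight a w y \<le> cweight a w z"
    using step_split[OF step.hyps(1)] by blast
  have iv1: "inv w X ?L1" using inv_step[OF step.hyps(1) step.prems(2)] .
  have IH: "\<forall>n. kraft (set ?L1) n \<le> 1 \<longrightarrow> gcost a w t \<le> fcost a w (set ?L1) n"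
    using step.IH step.prems iv1 by blast
  have dL: "distinct ?L" using step.prems(2) distinct_trees unfolding inv_def by blast
  have dL1: "distinct ?L1" using iv1 distinct_trees unfolding inv_def by blast
  have d: "distinct (x # y # R)" using dL e(1) by (metis mset_eq_imp_distinct_iff)
  have d1: "distinct (Node x y # R)" using dL1 e(2) by (metis mset_eq_imp_distinct_iff)
  have F: "set ?L = insert x (insert y (set R))" using e(1) by (metis list.simps(15) set_mset_mset)
  have F1: "set ?L1 = insert (Node x y) (set R)" using e(2) by (metis list.simps(15) set_mset_mset)
  have xy: "x \<in> set ?L" "y \<in> set ?L" "x \<noteq> y" using F d by auto
  have RR: "set ?L - {x, y} = set R" using F d by auto
  have nF: "Node x y \<notin> set ?L" using F d1 node_neq by auto
  have pos: "\<forall>T\<in>set ?L. cweight a w T \<ge> 0"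
  proof
    fix T assume "T \<in> set ?L"
    then have "\<forall>i\<in>set (leaves T). w i > 0" using step.prems(2) unfolding inv_def by auto
    then have "cweight a w T > 0" using cweight_pos[OF a] by blast
    then show "cweight a w T \<ge> 0" by simp
  qed
  have minw: "\<forall>z\<in>set ?L - {x, y}. cweight a w x \<le> cweight a w z \<and> cweight a w y \<le> cweight a w z"
    using mw RR by simp
  show ?case
  proof (intro allI impI)
    fix n assume k: "kraft (set ?L) n \<le> 1"
    obtain n2 where n2: "fcost a w (set ?L) n2 \<le> fcost a w (set ?L) n" "kraft (set ?L) n2 = kraft (set ?L) n"
      "\<forall>z\<in>set ?L - {x, y}. n2 z \<le> n2 x \<and> n2 z \<le> n2 y"
      using normalize[OF _ xy _ minw, of n] a by auto
    obtain n' where n': "kraft (insert (Node x y) (set ?L - {x, y})) n' \<le> 1"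
       "fcost a w (insert (Node x y) (set ?L - {x, y})) n' \<le> fcost a w (set ?L) n2"
      using merge[OF _ xy nF a pos _ n2(3)] k n2(2) by auto
    have "gcost a w t \<le> fcost a w (set ?L1) n'" using IH n' RR F1 by simp
    then show "gcost a w t \<le> fcost a w (set ?L) n" using n' n2 RR F1 by simp
  qed
qed


lemma phi_closed: "(a - 1) * phi a k = a ^ k - 1"
  by (induction k) (auto simp: phi_def algebra_simps)

lemma phi_one: "phi 1 k = real k"
  by (simp add: phi_def)

theorem lemma1:
  fixes X :: "'a set" and w :: "'a \<Rightarrow> real" and a :: real
    and xs :: "'a list" and t :: "'a ctree"
  assumes "finite X" and "card X \<ge> 2"
    and "\<forall>i\<in>X. w i > 0" and "a > 0"
    and "distinct xs" and "set xs = X" and "sorted (map w xs)"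
    and "(two_queue_step a w)\<^sup>*\<^sup>* (map Leaf xs, []) ([], [t])"
  shows "\<forall>c'. prefix_code X c' \<longrightarrow>
           L_pen a w X (\<lambda>i. length (codeword t i)) \<le> L_pen a w X (\<lambda>i. length (c' i))"
proof (intro allI impI)
  fix c' assume pc: "prefix_code X c'"
  have cl: "concat (map leaves (map Leaf xs)) = xs" by (induction xs) auto
  have iv0: "inv w X (fst (map Leaf xs, []) @ snd (map Leaf xs, ([]::'a ctree list)))"
    using assms(3,5,6) cl unfolding inv_def by simp
  have ivE: "inv w X (fst ([]::'a ctree list, [t]) @ snd ([]::'a ctree list, [t]))"
    using inv_steps[OF assms(8) iv0] .
  then have dt: "distinct (leaves t)" and st: "set (leaves t) = X" unfolding inv_def by auto
  define D where "D = (\<lambda>i. length (codeword t i))"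
  define E where "E = (\<lambda>i. length (c' i))"
  define n0 where "n0 T = (case T of Leaf i \<Rightarrow> E i | Node _ _ \<Rightarrow> 0)" for T :: "'a ctree"
  have F0: "set (fst (map Leaf xs, []) @ snd (map Leaf xs, ([]::'a ctree list))) = Leaf ` X"
    using assms(6) by simp
  have injL: "inj_on Leaf X" by (simp add: inj_on_def)
  have k0: "kraft (Leaf ` X) n0 = (\<Sum>i\<in>X. (1/2) ^ E i)"
    unfolding kraft_def by (simp add: sum.reindex[OF injL] n0_def)
  have k1: "kraft (Leaf ` X) n0 \<le> 1" using k0 kraft_prefix[OF assms(1) pc] unfolding E_def by simp
  have f0: "fcost a w (Leaf ` X) n0 = (\<Sum>i\<in>X. w i * phi a (E i))"
    unfolding fcost_def by (simp add: sum.reindex[OF injL] n0_def)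
  have "gcost a w t \<le> fcost a w (Leaf ` X) n0"
    using main[OF assms(8) assms(4) refl iv0] k1 F0 by simp
  moreover have "gcost a w t = (\<Sum>i\<in>X. w i * phi a (D i))"
    using gcost_sum[OF dt] st unfolding D_def by simp
  ultimately have GG: "(\<Sum>i\<in>X. w i * phi a (D i)) \<le> (\<Sum>i\<in>X. w i * phi a (E i))" using f0 by simp
  have Xne: "X \<noteq> {}" using assms(2) by auto
  have "L_pen a w X D \<le> L_pen a w X E"
  proof (cases "a = 1")
    case True
    have "(\<Sum>i\<in>X. w i * real (D i)) \<le> (\<Sum>i\<in>X. w i * real (E i))" using GG unfolding True phi_one .
    then show ?thesis unfolding L_pen_def using True by simp
  next
    case False
    define SD where "SD = (\<Sum>i\<in>X. w i * a ^ D i)"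
    define SE where "SE = (\<Sum>i\<in>X. w i * a ^ E i)"
    define W where "W = (\<Sum>i\<in>X. w i)"
    have SDp: "SD > 0" unfolding SD_def using assms(1,3,4) Xne by (intro sum_pos) auto
    have SEp: "SE > 0" unfolding SE_def using assms(1,3,4) Xne by (intro sum_pos) auto
    have pe: "(a - 1) * (w i * phi a k) = w i * a ^ k - w i" for i k
    proof -
      have "(a - 1) * (w i * phi a k) = w i * ((a - 1) * phi a k)" by (simp only: mult.left_commute)
      also have "\<dots> = w i * (a ^ k - 1)" by (simp only: phi_closed)
      also have "\<dots> = w i * a ^ k - w i" by (simp add: right_diff_distrib)
      finally show ?thesis .
    qed
    have eD: "(a - 1) * (\<Sum>i\<in>X. w i * phi a (D i)) = SD - W"
      unfolding SD_def W_def sum_distrib_left sum_subtractf[symmetric]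
      by (rule sum.cong[OF refl]) (rule pe)
    have eE: "(a - 1) * (\<Sum>i\<in>X. w i * phi a (E i)) = SE - W"
      unfolding SE_def W_def sum_distrib_left sum_subtractf[symmetric]
      by (rule sum.cong[OF refl]) (rule pe)
    show ?thesis
    proof (cases "a > 1")
      case True
      have "(a - 1) * (\<Sum>i\<in>X. w i * phi a (D i)) \<le> (a - 1) * (\<Sum>i\<in>X. w i * phi a (E i))"
        using GG True by (intro mult_left_mono) auto
      then have "SD \<le> SE" using eD eE by linarith
      then have "log a SD \<le> log a SE" using True SDp SEp by simp
      then show ?thesis using False unfolding L_pen_def SD_def SE_def by simp
    next
      case a1: False
      then have alt: "a < 1" using False by simp
      have "(a - 1) * (\<Sum>i\<in>X. w i * phi a (E i)) \<le> (a - 1) * (\<Sum>i\<in>X. w i * phi a (D i))"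
        using GG alt by (intro mult_left_mono_neg) auto
      then have "SE \<le> SD" using eD eE by linarith
      then have lnle: "ln SE \<le> ln SD" using SEp SDp by simp
      have lna: "ln a < 0" using alt assms(4) by simp
      have "ln SD / ln a \<le> ln SE / ln a" using divide_right_mono_neg[OF lnle, of "ln a"] lna by simp
      then have "log a SD \<le> log a SE" by (simp only: log_def)
      then show ?thesis using False unfolding L_pen_def SD_def SE_def by simp
    qed
  qed
then show "L_pen a w X (\<lambda>i. length (codeword t i)) \<le> L_pen a w X (\<lambda>i. length (c' i))"
    unfolding D_def E_def .
qed

end
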